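(* On $\mathcal V$ we have $B_2^{(1)}B_2^{(0)}=q\,B_2^{(0)}B_2^{(1)}$.
   Context: Plethystic notation: for a symmetric function $f$ and a rational expression $E$ in $x_1,\dots,x_N,q,t$, $f[E]$ is obtained by writing $f$ as a polynomial in the power sums $p_k$ and replacing each $p_k$ by $E$ with every variable $u$ replaced by $u^k$. Put $X=x_1+\cdots+x_N$ and $X^{tq}=X(1-t)/(1-q)$. $S_\mu$ is the Schur function; $S_{m,n}$ for the partition $(m,n)$, $S_m=S_{(m)}$, $S_0=1$. Let $\mathcal V$ be the $\mathbb Q[q,t]$-linear span of $\{S_\lambda[X^{tq}]:\ell(\lambda)\le2\}$, and define linear operators on $\mathcal V$ by, for $m\ge n\ge0$ (writing $S_k$ for $S_k[X^{tq}]$; products of single-row Schur functions expand into Schur functions of at most two rows): $B_2^{(0)}S_{m,n}[X^{tq}]=-q^{m+1}(1-q^{n+1})S_{m+1}S_{n+1}+q^n(1-q^{m+2})S_{m+2}S_n$, $B_2^{(1)}S_{m,n}[X^{tq}]=q^{m+n+1}\big((1-q^{n+1})S_{m+1}S_{n+1}-(1-q^{m+2})S_{m+2}S_n\big)$. *)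

theory Defs
  imports "HOL-Computational_Algebra.Polynomial"
begin

text \<open>Coefficient ring Q[q,t] is modelled as (rat poly) poly: outer variable q,
  inner variable t.  An element of V is a finitely supported coefficient function
  on pairs (m,n) with m >= n >= 0; the pair (m,n) stands for the basis element
  S_{m,n}[X^{tq}] (and (m,0) for S_m[X^{tq}]).\<close>

type_synonym coeff = "rat poly poly"
type_synonym vec = "nat \<times> nat \<Rightarrow> coeff"

definition qv :: coeff where "qv = [:0, 1:]"
definition tv :: coeff where "tv = [:[:0, 1:]:]"

definition inV :: "vec \<Rightarrow> bool" where
  "inV v \<longleftrightarrow> finite {p. v p \<noteq> 0} \<and> (\<forall>m n. v (m, n) \<noteq> 0 \<longrightarrow> n \<le> m)"

definition basis :: "nat \<Rightarrow> nat \<Rightarrow> vec" where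
  "basis m n = (\<lambda>p. if p = (m, n) then 1 else 0)"

text \<open>Pieri rule: S_a S_b = sum_{k=0}^{min a b} S_{a+b-k,k}.\<close>
definition prodS :: "nat \<Rightarrow> nat \<Rightarrow> vec" where
  "prodS a b = (\<lambda>(i, j). if i + j = a + b \<and> j \<le> min a b then 1 else 0)"

definition B0_basis :: "nat \<Rightarrow> nat \<Rightarrow> vec" where
  "B0_basis m n = (\<lambda>p. - (qv ^ (m + 1) * (1 - qv ^ (n + 1))) * prodS (m + 1) (n + 1) p
                       + qv ^ n * (1 - qv ^ (m + 2)) * prodS (m + 2) n p)"

definition B1_basis :: "nat \<Rightarrow> nat \<Rightarrow> vec" where
  "B1_basis m n = (\<lambda>p. qv ^ (m + n + 1) * ((1 - qv ^ (n + 1)) * prodS (m + 1) (n + 1) p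
                       - (1 - qv ^ (m + 2)) * prodS (m + 2) n p))"

definition lin_ext :: "(nat \<Rightarrow> nat \<Rightarrow> vec) \<Rightarrow> vec \<Rightarrow> vec" where
  "lin_ext T v = (\<lambda>k. \<Sum>p\<in>{p. v p \<noteq> 0}. v p * T (fst p) (snd p) k)"

definition B0 :: "vec \<Rightarrow> vec" where "B0 = lin_ext B0_basis"
definition B1 :: "vec \<Rightarrow> vec" where "B1 = lin_ext B1_basis"

end

theory Submission imports Defs begin
definition a0 :: "'a::comm_ring_1 \<Rightarrow> nat \<Rightarrow> nat \<Rightarrow> 'a" where "a0 q m n = - (q^(m+1)*(1-q^(n+1)))"
definition b0 :: "'a::comm_ring_1 \<Rightarrow> nat \<Rightarrow> nat \<Rightarrow> 'a" where "b0 q m n = q^n*(1-q^(m+2))"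
definition a1 :: "'a::comm_ring_1 \<Rightarrow> nat \<Rightarrow> nat \<Rightarrow> 'a" where "a1 q m n = q^(m+n+1)*(1-q^(n+1))"
definition b1 :: "'a::comm_ring_1 \<Rightarrow> nat \<Rightarrow> nat \<Rightarrow> 'a" where "b1 q m n = - (q^(m+n+1)*(1-q^(m+2)))"
definition sv :: "nat \<Rightarrow> nat \<Rightarrow> nat \<times> nat \<Rightarrow> coeff" where
  "sv M k x = (if fst x + snd x = M \<and> snd x \<le> k then 1 else 0)"

lemma prodS_sv: "b \<le> a \<Longrightarrow> prodS a b x = sv (a+b) b x"
  unfolding prodS_def sv_def by (cases x) (simp add: min_def)

lemma B0_form: "n \<le> m \<Longrightarrow> B0_basis m n x = a0 qv m n * sv (m+n+2) (n+1) x + b0 qv m n * sv (m+n+2) n x"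
proof -
  assume h: "n \<le> m"
  have "prodS (m+1) (n+1) x = sv (m+n+2) (n+1) x" using prodS_sv[of "n+1" "m+1" x] h by simp
  moreover have "prodS (m+2) n x = sv (m+n+2) n x" using prodS_sv[of n "m+2" x] h by (simp add: add.commute add.left_commute)
  ultimately show ?thesis unfolding B0_basis_def a0_def b0_def by simp
qed

lemma B1_form: "n \<le> m \<Longrightarrow> B1_basis m n x = a1 qv m n * sv (m+n+2) (n+1) x + b1 qv m n * sv (m+n+2) n x"
proof -
  assume h: "n \<le> m"
  have "prodS (m+1) (n+1) x = sv (m+n+2) (n+1) x" using prodS_sv[of "n+1" "m+1" x] h by simp
  moreover have "prodS (m+2) n x = sv (m+n+2) n x" using prodS_sv[of n "m+2" x] h by (simp add: add.commute add.left_commute)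
  ultimately show ?thesis unfolding B1_basis_def a1_def b1_def by (simp add: algebra_simps)
qed
lemma coef_id:
  fixes q :: "'a::comm_ring_1"
  assumes "j \<le> n + 2"
  shows "(if j=0 then 0 else (a0 q m n + (if j-1\<le>n then b0 q m n else 0)) * a1 q (m+n+2-(j-1)) (j-1))
       + (if j\<le>n+1 then (a0 q m n + (if j\<le>n then b0 q m n else 0)) * b1 q (m+n+2-j) j else 0)
   = q * ((if j=0 then 0 else (a1 q m n + (if j-1\<le>n then b1 q m n else 0)) * a0 q (m+n+2-(j-1)) (j-1))
       + (if j\<le>n+1 then (a1 q m n + (if j\<le>n then b1 q m n else 0)) * b0 q (m+n+2-j) j else 0))"
proof -
  consider "j = 0" | i d where "j = Suc i" "n = i + 1 + d" | "j = n+1" | "j = n+2"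
    proof -
    assume h0: "j = 0 \<Longrightarrow> thesis" and h1: "\<And>i d. j = Suc i \<Longrightarrow> n = i + 1 + d \<Longrightarrow> thesis"
      and h2: "j = n+1 \<Longrightarrow> thesis" and h3: "j = n+2 \<Longrightarrow> thesis"
    show thesis
    proof (cases j)
      case 0 then show ?thesis by (rule h0)
    next
      case (Suc i)
      show ?thesis
      proof (cases "j \<le> n")
        case True then show ?thesis using Suc h1[of i "n - j"] by simp
      next
        case False then show ?thesis using assms h2 h3 by linarith
      qed
    qed
  qed
  then show ?thesis
  proof cases
    case 1 then show ?thesis by (simp add: a0_def b0_def a1_def b1_def algebra_simps power_add)
  next
    case 2
    have e1: "m+n+2-(j-1) = m+d+3" and e2: "m+n+2-j = m+d+2" using 2 by auto
    have e3: "j - 1 \<le> n" "j \<le> n" "j \<le> n+1" "j \<noteq> 0" "j - 1 = i" "i \<le> n" using 2 by auto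
    define x y z where "x = q^m" and "y = q^d" and "z = q^i"
    have h: "a0 q m n = -(q*x*(1-q^2*z*y))" "b0 q m n = q*z*y*(1-q^2*x)"
        "a1 q m n = q^2*x*z*y*(1-q^2*z*y)" "b1 q m n = -(q^2*x*z*y*(1-q^2*x))"
        "a0 q (m+d+3) i = -(q^4*x*y*(1-q*z))" "a1 q (m+d+3) i = q^4*x*y*z*(1-q*z)"
        "b1 q (m+d+2) j = -(q^4*x*y*z*(1-q^4*x*y))" "b0 q (m+d+2) j = q*z*(1-q^4*x*y)"
        unfolding a0_def b0_def a1_def b1_def x_def y_def z_def 2
        by (simp_all add: power_add algebra_simps numeral_eq_Suc)
    have key: "(a0 q m n + b0 q m n) * a1 q (m+d+3) i + (a0 q m n + b0 q m n) * b1 q (m+d+2) j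
       = q * ((a1 q m n + b1 q m n) * a0 q (m+d+3) i + (a1 q m n + b1 q m n) * b0 q (m+d+2) j)"
      unfolding h by (simp add: algebra_simps)
    show ?thesis unfolding e1 e2 unfolding e3(5) using e3(1-4) e3(6) key by simp
  next
    case 3
    have e1: "m+n+2-(j-1) = m+2" and e2: "m+n+2-j = m+1" using 3 by auto
    show ?thesis using 3 unfolding e1 e2 by (simp add: a0_def b0_def a1_def b1_def algebra_simps power_add)
  next
    case 4
    have e1: "m+n+2-(j-1) = m+1" using 4 by auto
    show ?thesis using 4 unfolding e1 by (simp add: a0_def b0_def a1_def b1_def algebra_simps power_add)
  qed
qed

lemma sv_at: "j \<le> M \<Longrightarrow> sv M k (M-j, j) = (if j \<le> k then 1 else 0)"
  by (simp add: sv_def)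

lemma B1_shift:
  fixes m n j :: nat
  assumes "n \<le> m" "j \<le> n+1"
  shows "B1_basis (m+n+2-j) j x = a1 qv (m+n+2-j) j * sv (m+n+2+2) (Suc j) x + b1 qv (m+n+2-j) j * sv (m+n+2+2) j x"
proof -
  have a: "j \<le> m+n+2-j" using assms by arith
  have b: "m+n+2-j+j+2 = m+n+2+2" using assms by arith
  have "B1_basis (m+n+2-j) j x = a1 qv (m+n+2-j) j * sv (m+n+2-j+j+2) (j+1) x + b1 qv (m+n+2-j) j * sv (m+n+2-j+j+2) j x"
    by (rule B1_form[OF a])
  then show ?thesis unfolding b Suc_eq_plus1 .
qed

lemma B0_shift:
  fixes m n j :: nat
  assumes "n \<le> m" "j \<le> n+1"
  shows "B0_basis (m+n+2-j) j x = a0 qv (m+n+2-j) j * sv (m+n+2+2) (Suc j) x + b0 qv (m+n+2-j) j * sv (m+n+2+2) j x"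
proof -
  have a: "j \<le> m+n+2-j" using assms by arith
  have b: "m+n+2-j+j+2 = m+n+2+2" using assms by arith
  have "B0_basis (m+n+2-j) j x = a0 qv (m+n+2-j) j * sv (m+n+2-j+j+2) (j+1) x + b0 qv (m+n+2-j) j * sv (m+n+2-j+j+2) j x"
    by (rule B0_form[OF a])
  then show ?thesis unfolding b Suc_eq_plus1 .
qed

lemma B0_at:
  fixes m n j :: nat
  assumes nm: "n \<le> m" and j: "j \<le> n+1"
  shows "B0_basis m n (m+n+2-j, j) = a0 qv m n + (if j \<le> n then b0 qv m n else 0)"
proof -
  have hM: "j \<le> m+n+2" using j by arith
  have "B0_basis m n (m+n+2-j, j) = a0 qv m n * (if j \<le> n+1 then 1 else 0) + b0 qv m n * (if j \<le> n then 1 else 0)"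
    by (simp only: B0_form[OF nm] sv_at[OF hM])
  then show ?thesis using j by simp
qed

lemma B1_at:
  fixes m n j :: nat
  assumes nm: "n \<le> m" and j: "j \<le> n+1"
  shows "B1_basis m n (m+n+2-j, j) = a1 qv m n + (if j \<le> n then b1 qv m n else 0)"
proof -
  have hM: "j \<le> m+n+2" using j by arith
  have "B1_basis m n (m+n+2-j, j) = a1 qv m n * (if j \<le> n+1 then 1 else 0) + b1 qv m n * (if j \<le> n then 1 else 0)"
    by (simp only: B1_form[OF nm] sv_at[OF hM])
  then show ?thesis using j by simp
qed

lemma lin_ext_superset:
  assumes "finite A" "{p. w p \<noteq> 0} \<subseteq> A"
  shows "lin_ext T w x = (\<Sum>p\<in>A. w p * T (fst p) (snd p) x)"
  unfolding lin_ext_def using assms by (intro sum.mono_neutral_left) auto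

lemma lin_ext_slice:
  assumes "{p. w p \<noteq> 0} \<subseteq> (\<lambda>j. (M - j, j)) ` {..K}"
  shows "lin_ext T w x = (\<Sum>j\<le>K. w (M - j, j) * T (M - j) j x)"
proof -
  have inj: "inj_on (\<lambda>j. (M - j, j)) {..K}" by (auto simp: inj_on_def)
  have "lin_ext T w x = (\<Sum>p\<in>(\<lambda>j. (M - j, j)) ` {..K}. w p * T (fst p) (snd p) x)"
    using assms by (intro lin_ext_superset) auto
  also have "\<dots> = (\<Sum>j\<le>K. w (M - j, j) * T (M - j) j x)"
    by (subst sum.reindex[OF inj]) simp
  finally show ?thesis .
qed

lemma lin_ext_comp:
  assumes S: "finite S" and U: "\<And>p. p \<in> S \<Longrightarrow> finite {r. U p r \<noteq> 0}"
  shows "lin_ext T (\<lambda>r. \<Sum>p\<in>S. c p * U p r) x = (\<Sum>p\<in>S. c p * lin_ext T (U p) x)"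
proof -
  define A where "A = (\<Union>p\<in>S. {r. U p r \<noteq> 0})"
  have fA: "finite A" unfolding A_def using S U by auto
  have sub: "{r. (\<Sum>p\<in>S. c p * U p r) \<noteq> 0} \<subseteq> A"
  proof
    fix r assume "r \<in> {r. (\<Sum>p\<in>S. c p * U p r) \<noteq> 0}"
    then have nz: "(\<Sum>p\<in>S. c p * U p r) \<noteq> 0" by simp
    have "\<exists>p\<in>S. c p * U p r \<noteq> 0"
    proof (rule ccontr)
      assume "\<not> (\<exists>p\<in>S. c p * U p r \<noteq> 0)"
      then have "(\<Sum>p\<in>S. c p * U p r) = 0" by (intro sum.neutral) blast
      with nz show False by contradiction
    qed
    then obtain p where "p \<in> S" "U p r \<noteq> 0" by force
    then show "r \<in> A" unfolding A_def by blast
  qed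
  have "lin_ext T (\<lambda>r. \<Sum>p\<in>S. c p * U p r) x = (\<Sum>r\<in>A. (\<Sum>p\<in>S. c p * U p r) * T (fst r) (snd r) x)"
    by (rule lin_ext_superset[OF fA sub])
  also have "\<dots> = (\<Sum>r\<in>A. \<Sum>p\<in>S. c p * (U p r * T (fst r) (snd r) x))"
    by (simp only: sum_distrib_right mult.assoc)
  also have "\<dots> = (\<Sum>p\<in>S. \<Sum>r\<in>A. c p * (U p r * T (fst r) (snd r) x))"
    by (rule sum.swap)
  also have "\<dots> = (\<Sum>p\<in>S. c p * (\<Sum>r\<in>A. U p r * T (fst r) (snd r) x))"
    by (simp only: sum_distrib_left)
  also have "\<dots> = (\<Sum>p\<in>S. c p * lin_ext T (U p) x)"
  proof (rule sum.cong[OF refl])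
    fix p assume "p \<in> S"
    then have sub': "{r. U p r \<noteq> 0} \<subseteq> A" unfolding A_def by blast
    show "c p * (\<Sum>r\<in>A. U p r * T (fst r) (snd r) x) = c p * lin_ext T (U p) x"
      by (simp only: lin_ext_superset[OF fA sub'])
  qed
  finally show ?thesis .
qed

lemma B0_supp: "{r. B0_basis m n r \<noteq> 0} \<subseteq> (\<lambda>j. (m+n+2 - j, j)) ` {..n+1}"
proof
  fix r assume "r \<in> {r. B0_basis m n r \<noteq> 0}"
  then obtain i j where r: "r = (i,j)" "i + j = m+n+2" "j \<le> n+1"
    unfolding B0_basis_def prodS_def by (cases r) (auto split: if_splits)
  then show "r \<in> (\<lambda>j. (m+n+2 - j, j)) ` {..n+1}" by (auto intro!: image_eqI[of _ _ j])
qed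

lemma B1_supp: "{r. B1_basis m n r \<noteq> 0} \<subseteq> (\<lambda>j. (m+n+2 - j, j)) ` {..n+1}"
proof
  fix r assume "r \<in> {r. B1_basis m n r \<noteq> 0}"
  then obtain i j where r: "r = (i,j)" "i + j = m+n+2" "j \<le> n+1"
    unfolding B1_basis_def prodS_def by (cases r) (auto split: if_splits)
  then show "r \<in> (\<lambda>j. (m+n+2 - j, j)) ` {..n+1}" by (auto intro!: image_eqI[of _ _ j])
qed

lemma shift_sum:
  fixes c g h s :: "nat \<Rightarrow> 'a::comm_ring_1"
  shows "(\<Sum>j\<le>k. c j * (g j * s (Suc j) + h j * s j))
    = (\<Sum>j\<le>Suc k. ((if j = 0 then 0 else c (j-1) * g (j-1)) + (if j \<le> k then c j * h j else 0)) * s j)"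
proof (induction k)
  case 0
  then show ?case by (simp add: algebra_simps)
next
  case (Suc k)
  have "(\<Sum>j\<le>Suc (Suc k). ((if j = 0 then 0 else c (j-1) * g (j-1)) + (if j \<le> Suc k then c j * h j else 0)) * s j)
     = (\<Sum>j\<le>Suc k. ((if j = 0 then 0 else c (j-1) * g (j-1)) + (if j \<le> Suc k then c j * h j else 0)) * s j)
       + c (Suc k) * g (Suc k) * s (Suc (Suc k))" by simp
  also have "(\<Sum>j\<le>Suc k. ((if j = 0 then 0 else c (j-1) * g (j-1)) + (if j \<le> Suc k then c j * h j else 0)) * s j)
     = (\<Sum>j\<le>Suc k. ((if j = 0 then 0 else c (j-1) * g (j-1)) + (if j \<le> k then c j * h j else 0)) * s j)
       + c (Suc k) * h (Suc k) * s (Suc k)"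
    by (simp add: algebra_simps sum.distrib)
  finally show ?case using Suc.IH by (simp add: algebra_simps)
qed


lemma basis_id:
  assumes nm: "n \<le> m"
  shows "lin_ext B1_basis (B0_basis m n) x = qv * lin_ext B0_basis (B1_basis m n) x"
proof -
  have "lin_ext B1_basis (B0_basis m n) x = (\<Sum>j\<le>n+1. B0_basis m n (m+n+2-j, j) * B1_basis (m+n+2-j) j x)"
    by (rule lin_ext_slice[OF B0_supp])
  also have "\<dots> = (\<Sum>j\<le>n+1. (a0 qv m n + (if j \<le> n then b0 qv m n else 0)) *
       (a1 qv (m+n+2-j) j * sv (m+n+2+2) (Suc j) x + b1 qv (m+n+2-j) j * sv (m+n+2+2) j x))"
    proof (rule sum.cong[OF refl])
    fix j assume "j \<in> {..n+1}" then have h: "j \<le> n+1" by simp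
    show "B0_basis m n (m+n+2-j, j) * B1_basis (m+n+2-j) j x = (a0 qv m n + (if j \<le> n then b0 qv m n else 0)) *
       (a1 qv (m+n+2-j) j * sv (m+n+2+2) (Suc j) x + b1 qv (m+n+2-j) j * sv (m+n+2+2) j x)"
      by (simp only: B0_at[OF nm h] B1_shift[OF nm h])
  qed
  also have "\<dots> = (\<Sum>j\<le>Suc (n+1). ((if j = 0 then 0 else (a0 qv m n + (if j-1 \<le> n then b0 qv m n else 0)) * a1 qv (m+n+2-(j-1)) (j-1))
        + (if j \<le> n+1 then (a0 qv m n + (if j \<le> n then b0 qv m n else 0)) * b1 qv (m+n+2-j) j else 0)) * sv (m+n+2+2) j x)"
    by (rule shift_sum[where c="\<lambda>j. a0 qv m n + (if j \<le> n then b0 qv m n else 0)" and g="\<lambda>j. a1 qv (m+n+2-j) j" and h="\<lambda>j. b1 qv (m+n+2-j) j" and s="\<lambda>j. sv (m+n+2+2) j x" and k="n+1"])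
  also have "\<dots> = (\<Sum>j\<le>Suc (n+1). qv * ((if j = 0 then 0 else (a1 qv m n + (if j-1 \<le> n then b1 qv m n else 0)) * a0 qv (m+n+2-(j-1)) (j-1))
        + (if j \<le> n+1 then (a1 qv m n + (if j \<le> n then b1 qv m n else 0)) * b0 qv (m+n+2-j) j else 0)) * sv (m+n+2+2) j x)"
    proof (rule sum.cong[OF refl])
    fix j assume "j \<in> {..Suc (n+1)}" then have h: "j \<le> n+2" by simp
    show "((if j = 0 then 0 else (a0 qv m n + (if j-1 \<le> n then b0 qv m n else 0)) * a1 qv (m+n+2-(j-1)) (j-1))
        + (if j \<le> n+1 then (a0 qv m n + (if j \<le> n then b0 qv m n else 0)) * b1 qv (m+n+2-j) j else 0)) * sv (m+n+2+2) j x
      = qv * ((if j = 0 then 0 else (a1 qv m n + (if j-1 \<le> n then b1 qv m n else 0)) * a0 qv (m+n+2-(j-1)) (j-1))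
        + (if j \<le> n+1 then (a1 qv m n + (if j \<le> n then b1 qv m n else 0)) * b0 qv (m+n+2-j) j else 0)) * sv (m+n+2+2) j x"
      by (rule arg_cong[where f="\<lambda>t. t * sv (m+n+2+2) j x", OF coef_id[OF h]])
  qed
  also have "\<dots> = qv * (\<Sum>j\<le>Suc (n+1). ((if j = 0 then 0 else (a1 qv m n + (if j-1 \<le> n then b1 qv m n else 0)) * a0 qv (m+n+2-(j-1)) (j-1))
        + (if j \<le> n+1 then (a1 qv m n + (if j \<le> n then b1 qv m n else 0)) * b0 qv (m+n+2-j) j else 0)) * sv (m+n+2+2) j x)"
    by (simp only: sum_distrib_left mult.assoc)
  also have "(\<Sum>j\<le>Suc (n+1). ((if j = 0 then 0 else (a1 qv m n + (if j-1 \<le> n then b1 qv m n else 0)) * a0 qv (m+n+2-(j-1)) (j-1))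
        + (if j \<le> n+1 then (a1 qv m n + (if j \<le> n then b1 qv m n else 0)) * b0 qv (m+n+2-j) j else 0)) * sv (m+n+2+2) j x)
     = (\<Sum>j\<le>n+1. (a1 qv m n + (if j \<le> n then b1 qv m n else 0)) *
       (a0 qv (m+n+2-j) j * sv (m+n+2+2) (Suc j) x + b0 qv (m+n+2-j) j * sv (m+n+2+2) j x))"
    by (rule shift_sum[where c="\<lambda>j. a1 qv m n + (if j \<le> n then b1 qv m n else 0)" and g="\<lambda>j. a0 qv (m+n+2-j) j" and h="\<lambda>j. b0 qv (m+n+2-j) j" and s="\<lambda>j. sv (m+n+2+2) j x" and k="n+1", symmetric])
  also have "\<dots> = (\<Sum>j\<le>n+1. B1_basis m n (m+n+2-j, j) * B0_basis (m+n+2-j) j x)"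
    proof (rule sum.cong[OF refl])
    fix j assume "j \<in> {..n+1}" then have h: "j \<le> n+1" by simp
    show "(a1 qv m n + (if j \<le> n then b1 qv m n else 0)) *
       (a0 qv (m+n+2-j) j * sv (m+n+2+2) (Suc j) x + b0 qv (m+n+2-j) j * sv (m+n+2+2) j x) = B1_basis m n (m+n+2-j, j) * B0_basis (m+n+2-j) j x"
      by (simp only: B1_at[OF nm h] B0_shift[OF nm h])
  qed
  also have "\<dots> = lin_ext B0_basis (B1_basis m n) x"
    by (rule lin_ext_slice[OF B1_supp, symmetric])
  finally show ?thesis .
qed

theorem mainTheorem10:
  assumes "inV v"
  shows "B1 (B0 v) = (\<lambda>p. qv * B0 (B1 v) p)"
proof
  fix x
  define S where "S = {p. v p \<noteq> 0}"
  have fS: "finite S" and le: "\<And>p. p \<in> S \<Longrightarrow> snd p \<le> fst p"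
    using assms unfolding inV_def S_def by auto
  have f0: "finite {r. B0_basis (fst p) (snd p) r \<noteq> 0}" for p
    by (rule finite_subset[OF B0_supp]) simp
  have f1: "finite {r. B1_basis (fst p) (snd p) r \<noteq> 0}" for p
    by (rule finite_subset[OF B1_supp]) simp
  have e0: "B0 v = (\<lambda>r. \<Sum>p\<in>S. v p * B0_basis (fst p) (snd p) r)"
    unfolding B0_def lin_ext_def S_def ..
  have e1: "B1 v = (\<lambda>r. \<Sum>p\<in>S. v p * B1_basis (fst p) (snd p) r)"
    unfolding B1_def lin_ext_def S_def ..
  have "B1 (B0 v) x = (\<Sum>p\<in>S. v p * lin_ext B1_basis (B0_basis (fst p) (snd p)) x)"
    unfolding e0 B1_def by (rule lin_ext_comp[OF fS f0])
  also have "\<dots> = (\<Sum>p\<in>S. v p * (qv * lin_ext B0_basis (B1_basis (fst p) (snd p)) x))"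
    by (rule sum.cong[OF refl]) (simp add: basis_id le)
  also have "\<dots> = qv * (\<Sum>p\<in>S. v p * lin_ext B0_basis (B1_basis (fst p) (snd p)) x)"
    by (simp add: sum_distrib_left algebra_simps)
  also have "(\<Sum>p\<in>S. v p * lin_ext B0_basis (B1_basis (fst p) (snd p)) x) = B0 (B1 v) x"
    unfolding e1 B0_def by (rule lin_ext_comp[OF fS f1, symmetric])
  finally show "B1 (B0 v) x = qv * B0 (B1 v) x" .
qed

end
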